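(* For every $T\in\mathbb{T}$, $c(T)\le \beta(T)$.
   Context: Let $\mathbb{T}$ be the set of finite terms defined inductively by: the constant $e\in\mathbb{T}$; and if $X\in\mathbb{T}$ and $Xs$ is a finite (possibly empty) list of elements of $\mathbb{T}$, then $v(X,Xs)\in\mathbb{T}$ and $w(X,Xs)\in\mathbb{T}$. Write $[\,]$ for the empty list and $[X|Xs]$ for the list with first element $X$ followed by $Xs$. Define $n:\mathbb{T}\to\mathbb{N}$ by $n(e)=0$, $n(v(X,[\,]))=2^{n(X)+1}-1$, $n(v(X,[Y|Xs]))=(n(w(Y,Xs))+1)2^{n(X)+1}-1$, $n(w(X,[\,]))=2^{n(X)+2}-2$, $n(w(X,[Y|Xs]))=(n(v(Y,Xs))+2)2^{n(X)+1}-2$. Structural complexity $c:\mathbb{T}\to\mathbb{N}$: $c(e)=0$ and $c(v(X,Xs))=c(w(X,Xs))=\sum_{Y\in[X|Xs]}(1+c(Y))$ (sum over the elements of the list $[X|Xs]$). Bitsize $\beta:\mathbb{T}\to\mathbb{N}$: $\beta(e)=0$ and $\beta(v(X,Xs))=\beta(w(X,Xs))=\sum_{Y\in[X|Xs]}(n(Y)+1)$; this equals the number of applications of $o(x)=2x+1$ and $i(x)=2x+2$ in the unique representation of $n(T)$ as an iterated composition of $o$ and $i$ applied to $0$. *)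

theory Defs
  imports Main
begin

datatype T = e | v T "T list" | w T "T list"

fun n :: "T \<Rightarrow> nat" where
  "n e = 0"
| "n (v X []) = 2 ^ (n X + 1) - 1"
| "n (v X (Y # Xs)) = (n (w Y Xs) + 1) * 2 ^ (n X + 1) - 1"
| "n (w X []) = 2 ^ (n X + 2) - 2"
| "n (w X (Y # Xs)) = (n (v Y Xs) + 2) * 2 ^ (n X + 1) - 2"

fun c :: "T \<Rightarrow> nat" where
  "c e = 0"
| "c (v X Xs) = (\<Sum>Y\<leftarrow>X # Xs. 1 + c Y)"
| "c (w X Xs) = (\<Sum>Y\<leftarrow>X # Xs. 1 + c Y)"

fun bitsize :: "T \<Rightarrow> nat" where
  "bitsize e = 0"
| "bitsize (v X Xs) = (\<Sum>Y\<leftarrow>X # Xs. n Y + 1)"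
| "bitsize (w X Xs) = (\<Sum>Y\<leftarrow>X # Xs. n Y + 1)"

end

theory Submission
  imports Defs
begin

lemma pow_ge: "k + 1 \<le> (2::nat) ^ (k + 1) - 1"
proof -
  have "k + 2 \<le> (2::nat) ^ (k + 1)"
    by (induction k) auto
  thus ?thesis by linarith
qed

lemma pow_ge1: "(1::nat) \<le> 2 ^ k" by simp

lemma bs_le_n: "bitsize (v X Xs) \<le> n (v X Xs) \<and> bitsize (w X Xs) \<le> n (w X Xs)"
proof (induction Xs arbitrary: X)
  case Nil
  have a: "n X + 1 \<le> 2 ^ (n X + 1) - 1" by (rule pow_ge)
  have "n X + 1 \<le> 2 ^ (n X + 2) - 2"
  proof -
    have "(2::nat) ^ (n X + 2) = 2 * 2 ^ (n X + 1)" by simp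
    thus ?thesis using a by linarith
  qed
  then show ?case using a by simp
next
  case (Cons Y Xs)
  have a: "n X + 1 \<le> 2 ^ (n X + 1) - 1" by (rule pow_ge)
  have p: "(1::nat) \<le> 2 ^ (n X + 1)" by simp
  have IH1: "bitsize (v Y Xs) \<le> n (v Y Xs)" and IH2: "bitsize (w Y Xs) \<le> n (w Y Xs)"
    using Cons.IH by auto
  have m1: "(n (w Y Xs) + 1) * 2 ^ (n X + 1) \<ge> n (w Y Xs) + 2 ^ (n X + 1)"
  proof -
    have "(n (w Y Xs) + 1) * 2 ^ (n X + 1) = n (w Y Xs) * 2 ^ (n X + 1) + 2 ^ (n X + 1)"
      by (simp add: algebra_simps)
    moreover have "n (w Y Xs) \<le> n (w Y Xs) * 2 ^ (n X + 1)" using p by simp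
    ultimately show ?thesis by linarith
  qed
  have m2: "(n (v Y Xs) + 2) * 2 ^ (n X + 1) \<ge> n (v Y Xs) + 2 * 2 ^ (n X + 1)"
  proof -
    have "(n (v Y Xs) + 2) * 2 ^ (n X + 1) = n (v Y Xs) * 2 ^ (n X + 1) + 2 * 2 ^ (n X + 1)"
      by (simp add: algebra_simps)
    moreover have "n (v Y Xs) \<le> n (v Y Xs) * 2 ^ (n X + 1)" using p by simp
    ultimately show ?thesis by linarith
  qed
  have "bitsize (v X (Y # Xs)) = n X + 1 + bitsize (w Y Xs)" by simp
  moreover have "bitsize (w X (Y # Xs)) = n X + 1 + bitsize (v Y Xs)" by simp
  moreover have "n (v X (Y # Xs)) = (n (w Y Xs) + 1) * 2 ^ (n X + 1) - 1" by simp
  moreover have "n (w X (Y # Xs)) = (n (v Y Xs) + 2) * 2 ^ (n X + 1) - 2" by simp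
  ultimately show ?case using m1 m2 a p IH1 IH2 by linarith
qed

lemma c_le_n: "c t \<le> bitsize t \<and> bitsize t \<le> n t"
proof (induction t)
  case e
  then show ?case by simp
next
  case (v X Xs)
  have "\<forall>Y\<in>set (X # Xs). 1 + c Y \<le> n Y + 1" using v by (auto intro: le_trans)
  hence "(\<Sum>Y\<leftarrow>X # Xs. 1 + c Y) \<le> (\<Sum>Y\<leftarrow>X # Xs. n Y + 1)"
    by (intro sum_list_mono) auto
  then show ?case using bs_le_n[of X Xs] by simp
next
  case (w X Xs)
  have "\<forall>Y\<in>set (X # Xs). 1 + c Y \<le> n Y + 1" using w by (auto intro: le_trans)
  hence "(\<Sum>Y\<leftarrow>X # Xs. 1 + c Y) \<le> (\<Sum>Y\<leftarrow>X # Xs. n Y + 1)"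
    by (intro sum_list_mono) auto
  then show ?case using bs_le_n[of X Xs] by simp
qed

theorem proposition11:
  fixes t :: T
  shows "c t \<le> bitsize t"
  using c_le_n by blast

end
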